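(* Let $\mathfrak K$ be a cone of $\mathbb R^d$-valued predictable $S$-integrable processes (i.e. $\vartheta\in\mathfrak K$, $c\ge 0$ imply $c\vartheta\in\mathfrak K$) such that $\vartheta\cdot S_T\in L^2(P)$ for all $\vartheta\in\mathfrak K$. Let $\tilde\varphi\in\mathfrak K$ be a solution of the problem $$\text{minimise } E\big[|1-\vartheta\cdot S_T|^2\big] \text{ over } \vartheta\in\mathfrak K,$$ and assume $\tilde\varphi\cdot S_T\not\equiv 1$ and $E[\tilde\varphi\cdot S_T]>0$. Then, for $\gamma>0$, the strategy $$\tilde\vartheta=\frac{1}{\gamma}\,\frac{1}{E[1-\tilde\varphi\cdot S_T]}\,\tilde\varphi$$ solves the problem: maximise $E[V_T(x,\vartheta)]-\frac{\gamma}{2}\mathrm{Var}[V_T(x,\vartheta)]$ over $\vartheta\in\mathfrak K$; and for $m>x$ the strategy $$\tilde\vartheta^{(m,x)}=\frac{m-x}{E[\tilde\varphi\cdot S_T]}\,\tilde\varphi$$ solves the problem: minimise $\mathrm{Var}[V_T(x,\vartheta)]$ subject to $E[V_T(x,\vartheta)]=m$ and $\vartheta\in\mathfrak K$.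
   Context: $(\Omega,\mathcal F,P)$ is a probability space with a filtration $(\mathcal F_t)_{0\le t\le T}$ satisfying the usual conditions, $T>0$ fixed. $S$ is an $\mathbb R^d$-valued RCLL semimartingale (discounted prices of $d$ risky assets; the riskless asset has price $1$). For $x\in\mathbb R$ and an $S$-integrable predictable $\vartheta$, $V_t(x,\vartheta):=x+\int_0^t\vartheta_u\,dS_u=x+\vartheta\cdot S_t$. *)

theory Defs
  imports "HOL-Probability.Probability"
begin

text \<open>Abstract setting: strategies are elements of a real vector space of processes;
  G th is the terminal gain th . S_T (a random variable on M).
  Terminal wealth V_T(x,th) = x + th . S_T.\<close>

definition wealth :: "real \<Rightarrow> ('p \<Rightarrow> 'a \<Rightarrow> real) \<Rightarrow> 'p \<Rightarrow> 'a \<Rightarrow> real" where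
  "wealth x G th = (\<lambda>\<omega>. x + G th \<omega>)"

definition cone :: "'p::real_vector set \<Rightarrow> bool" where
  "cone K \<longleftrightarrow> (\<forall>th\<in>K. \<forall>c::real. c \<ge> 0 \<longrightarrow> c *\<^sub>R th \<in> K)"

end

theory Submission imports Defs begin

lemma (in prob_space) mom:
  fixes X :: "'a \<Rightarrow> real"
  assumes [measurable]: "X \<in> borel_measurable M" and sq: "integrable M (\<lambda>w. (X w)\<^sup>2)"
  shows "integrable M X"
    and "expectation (\<lambda>w. (1 - c * X w)\<^sup>2) = 1 - 2*c*expectation X + c\<^sup>2 * expectation (\<lambda>w. (X w)\<^sup>2)"
    and "expectation (\<lambda>w. x + X w) = x + expectation X"
    and "variance (\<lambda>w. x + X w) = expectation (\<lambda>w. (X w)\<^sup>2) - (expectation X)\<^sup>2"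
    and "(expectation X)\<^sup>2 \<le> expectation (\<lambda>w. (X w)\<^sup>2)"
    and "integrable M (\<lambda>w. (1 - c * X w)\<^sup>2)"
    and "expectation (\<lambda>w. x - X w) = x - expectation X"
proof -
  show I: "integrable M X" by (rule square_integrable_imp_integrable[OF assms])
  have e1: "(\<lambda>w. (1 - c * X w)\<^sup>2) = (\<lambda>w. 1 - (2*c) * X w + c\<^sup>2 * (X w)\<^sup>2)"
    by (auto simp: power2_eq_square algebra_simps)
  show "expectation (\<lambda>w. (1 - c * X w)\<^sup>2) = 1 - 2*c*expectation X + c\<^sup>2 * expectation (\<lambda>w. (X w)\<^sup>2)"
    unfolding e1 using I sq by (simp add: prob_space)
  show e2: "expectation (\<lambda>w. x + X w) = x + expectation X" using I by (simp add: prob_space)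
  have e3: "(\<lambda>w. (x + X w - (x + expectation X))\<^sup>2) = (\<lambda>w. (X w)\<^sup>2 - (2*expectation X) * X w + (expectation X)\<^sup>2)"
    by (auto simp: power2_eq_square algebra_simps)
  show v: "variance (\<lambda>w. x + X w) = expectation (\<lambda>w. (X w)\<^sup>2) - (expectation X)\<^sup>2"
    unfolding e2 e3 using I sq by (simp add: prob_space power2_eq_square)
  have "0 \<le> variance (\<lambda>w. x + X w)" by (simp add: integral_nonneg_AE)
  then show "(expectation X)\<^sup>2 \<le> expectation (\<lambda>w. (X w)\<^sup>2)" using v by simp
  show "integrable M (\<lambda>w. (1 - c * X w)\<^sup>2)" unfolding e1 using I sq by simp
  show "expectation (\<lambda>w. x - X w) = x - expectation X" using I by (simp add: prob_space)
qed

theorem lemma2p1: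
  fixes M :: "'a measure" and K :: "'p::real_vector set"
    and G :: "'p \<Rightarrow> 'a \<Rightarrow> real" and phi :: 'p and x gamma m :: real
  assumes P: "prob_space M"
    and coneK: "cone K"
    and G_hom: "\<forall>th\<in>K. \<forall>c::real. c \<ge> 0 \<longrightarrow> (AE \<omega> in M. G (c *\<^sub>R th) \<omega> = c * G th \<omega>)"
    and L2: "\<forall>th\<in>K. G th \<in> borel_measurable M \<and> integrable M (\<lambda>\<omega>. (G th \<omega>)\<^sup>2)"
    and phiK: "phi \<in> K"
    and phi_opt: "\<forall>th\<in>K. prob_space.expectation M (\<lambda>\<omega>. (1 - G phi \<omega>)\<^sup>2)
                            \<le> prob_space.expectation M (\<lambda>\<omega>. (1 - G th \<omega>)\<^sup>2)"
    and phi_not1: "\<not> (AE \<omega> in M. G phi \<omega> = 1)"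
    and phi_pos: "prob_space.expectation M (G phi) > 0"
  shows "(gamma > 0 \<longrightarrow>
           (let th' = ((1 / gamma) * (1 / prob_space.expectation M (\<lambda>\<omega>. 1 - G phi \<omega>))) *\<^sub>R phi
            in th' \<in> K \<and>
               (\<forall>th\<in>K. prob_space.expectation M (wealth x G th)
                          - gamma / 2 * prob_space.variance M (wealth x G th)
                        \<le> prob_space.expectation M (wealth x G th')
                          - gamma / 2 * prob_space.variance M (wealth x G th'))))
       \<and> (m > x \<longrightarrow>
           (let th' = ((m - x) / prob_space.expectation M (G phi)) *\<^sub>R phi
            in th' \<in> K \<and> prob_space.expectation M (wealth x G th') = m \<and>
               (\<forall>th\<in>K. prob_space.expectation M (wealth x G th) = m \<longrightarrow>
                  prob_space.variance M (wealth x G th') \<le> prob_space.variance M (wealth x G th))))"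
proof -
  interpret P: prob_space M by (rule P)
  have meas: "G th \<in> borel_measurable M" if "th \<in> K" for th using L2 that by blast
  have sq: "integrable M (\<lambda>w. (G th w)\<^sup>2)" if "th \<in> K" for th using L2 that by blast
  define mu where "mu th = P.expectation (G th)" for th
  define s where "s th = P.expectation (\<lambda>w. (G th w)\<^sup>2)" for th
  define a where "a = mu phi"
  define b where "b = s phi"
  have cK: "c *\<^sub>R th \<in> K" if "th \<in> K" "c \<ge> 0" for th c
    using coneK that unfolding cone_def by blast
  have scale: "mu (c *\<^sub>R th) = c * mu th \<and> s (c *\<^sub>R th) = c\<^sup>2 * s th"
    if th: "th \<in> K" and c: "c \<ge> 0" for th c
  proof -
    have ae: "AE w in M. G (c *\<^sub>R th) w = c * G th w" using G_hom th c by blast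
    have "mu (c *\<^sub>R th) = P.expectation (\<lambda>w. c * G th w)"
      unfolding mu_def using ae meas[OF th] meas[OF cK[OF th c]]
      by (intro integral_cong_AE) auto
    moreover have "s (c *\<^sub>R th) = P.expectation (\<lambda>w. c\<^sup>2 * (G th w)\<^sup>2)"
      unfolding s_def using ae meas[OF th] meas[OF cK[OF th c]]
      by (intro integral_cong_AE) (auto simp: power_mult_distrib)
    ultimately show ?thesis unfolding mu_def s_def by simp
  qed
  have quad1: "P.expectation (\<lambda>w. (1 - G th w)\<^sup>2) = 1 - 2 * mu th + s th" if "th \<in> K" for th
    using P.mom(2)[OF meas[OF that] sq[OF that], of 1] unfolding mu_def s_def by simp
  have A: "1 - 2*a + b \<le> 1 - 2*c*mu th + c\<^sup>2 * s th" if th: "th \<in> K" and c: "c \<ge> 0" for th c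
  proof -
    have "1 - 2*a + b = P.expectation (\<lambda>w. (1 - G phi w)\<^sup>2)" using quad1[OF phiK] a_def b_def by simp
    also have "\<dots> \<le> P.expectation (\<lambda>w. (1 - G (c *\<^sub>R th) w)\<^sup>2)" using phi_opt cK[OF th c] by blast
    also have "\<dots> = 1 - 2*c*mu th + c\<^sup>2 * s th" using quad1[OF cK[OF th c]] scale[OF th c] by simp
    finally show ?thesis .
  qed
  have spos: "(mu th)\<^sup>2 \<le> s th" if "th \<in> K" for th using P.mom(5)[OF meas[OF that] sq[OF that]] unfolding mu_def s_def by simp
  have B: "(mu th)\<^sup>2 \<le> s th * (2*a - b)" if th: "th \<in> K" and m: "mu th > 0" for th
  proof -
    have sp: "s th > 0" using spos[OF th] m by (smt (verit) zero_less_power)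
    define c where "c = mu th / s th"
    have c0: "c \<ge> 0" using sp m by (simp add: c_def)
    have e1: "c * mu th = (mu th)\<^sup>2 / s th" by (simp add: c_def power2_eq_square)
    have e2: "c\<^sup>2 * s th = (mu th)\<^sup>2 / s th" using sp by (simp add: c_def power2_eq_square)
    have "1 - 2*a + b \<le> 1 - 2*(c*mu th) + c\<^sup>2 * s th" using A[OF th c0] by simp
    then have "(mu th)\<^sup>2 / s th \<le> 2*a - b" unfolding e1 e2 by simp
    then show ?thesis using sp by (simp add: pos_divide_le_eq mult.commute)
  qed
  have apos: "a > 0" using phi_pos unfolding a_def mu_def by simp
  have ab: "a = b"
  proof -
    have "a\<^sup>2 \<le> b * (2*a - b)" using B[OF phiK] apos unfolding a_def b_def by simp
    then have "(a - b)\<^sup>2 \<le> 0" by (simp add: power2_eq_square algebra_simps)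
    then show ?thesis by simp
  qed
  have a1: "a < 1"
  proof -
    have "a\<^sup>2 \<le> a" using spos[OF phiK] ab unfolding a_def b_def by simp
    then have le: "a \<le> 1" using apos by (simp add: power2_eq_square)
    show ?thesis
    proof (rule ccontr)
      assume "\<not> a < 1"
      then have "a = 1" using le by simp
      then have "P.expectation (\<lambda>w. (1 - G phi w)\<^sup>2) = 0" using quad1[OF phiK] ab unfolding a_def b_def by simp
      then have "AE w in M. (1 - G phi w)\<^sup>2 = 0"
        using integral_nonneg_eq_0_iff_AE[of M "\<lambda>w. (1 - G phi w)\<^sup>2"] P.mom(6)[OF meas[OF phiK] sq[OF phiK], of 1] by simp
      then have "AE w in M. G phi w = 1" by (auto elim: AE_mp)
      then show False using phi_not1 by simp
    qed
  qed
  have E: "(mu th)\<^sup>2 \<le> s th * a" if "th \<in> K" "mu th > 0" for th using B[OF that] ab by simp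
  have W1: "P.expectation (wealth x G th) = x + mu th" if "th \<in> K" for th
    using P.mom(3)[OF meas[OF that] sq[OF that], of x] unfolding wealth_def mu_def by simp
  have W2: "P.variance (wealth x G th) = s th - (mu th)\<^sup>2"
    if "th \<in> K" for th
    using P.mom(3)[OF meas[OF that] sq[OF that], of x] P.mom(4)[OF meas[OF that] sq[OF that], of x] unfolding wealth_def mu_def s_def by simp
  have VL: "s th - (mu th)\<^sup>2 \<ge> (mu th)\<^sup>2 * (1 - a) / a" if "th \<in> K" "mu th > 0" for th
  proof -
    have "(mu th)\<^sup>2 * (1 - a) \<le> (s th - (mu th)\<^sup>2) * a" using E[OF that] by (simp add: algebra_simps)
    then show ?thesis using apos by (simp add: pos_divide_le_eq)
  qed
  have Em1: "P.expectation (\<lambda>w. 1 - G phi w) = 1 - a"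
    using P.mom(7)[OF meas[OF phiK] sq[OF phiK], of 1] unfolding a_def mu_def by simp
  show ?thesis
  proof (intro conjI impI)
    assume g: "gamma > 0"
    define c where "c = (1 / gamma) * (1 / (1 - a))"
    have c0: "c > 0" using g a1 by (simp add: c_def)
    have cga: "c * gamma * (1 - a) = 1" using g a1 by (simp add: c_def)
    have th'K: "c *\<^sub>R phi \<in> K" using cK[OF phiK] c0 by simp
    have m': "mu (c *\<^sub>R phi) = c * a" and s': "s (c *\<^sub>R phi) = c\<^sup>2 * a"
      using scale[OF phiK, of c] c0 ab unfolding a_def b_def by auto
    have rhs: "P.expectation (wealth x G (c *\<^sub>R phi)) - gamma / 2 * P.variance (wealth x G (c *\<^sub>R phi))
       = x + c * a / 2"
    proof -
      have "P.expectation (wealth x G (c *\<^sub>R phi)) - gamma / 2 * P.variance (wealth x G (c *\<^sub>R phi))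
         = x + c * a - gamma / 2 * (c\<^sup>2 * a - (c * a)\<^sup>2)" unfolding W2[OF th'K] unfolding W1[OF th'K] using m' s' by simp
      also have "\<dots> = x + c * a - (c * gamma * (1 - a)) * (c * a) / 2"
        by (simp add: power2_eq_square field_simps)
      finally show ?thesis using cga by simp
    qed
    show "let th' = ((1 / gamma) * (1 / P.expectation (\<lambda>\<omega>. 1 - G phi \<omega>))) *\<^sub>R phi
            in th' \<in> K \<and>
               (\<forall>th\<in>K. P.expectation (wealth x G th)
                          - gamma / 2 * P.variance (wealth x G th)
                        \<le> P.expectation (wealth x G th')
                          - gamma / 2 * P.variance (wealth x G th'))"
      unfolding Let_def Em1 c_def[symmetric] rhs
    proof (intro conjI ballI th'K)
      fix th assume th: "th \<in> K"
      show "P.expectation (wealth x G th) - gamma / 2 * P.variance (wealth x G th) \<le> x + c * a / 2"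
      proof (cases "mu th > 0")
        case False
        have "gamma / 2 * (s th - (mu th)\<^sup>2) \<ge> 0" using spos[OF th] g by simp
        then show ?thesis unfolding W2[OF th] unfolding W1[OF th] using False mult_pos_pos[OF c0 apos] by linarith
      next
        case True
        define q where "q = gamma * (1 - a) / a"
        have q0: "q > 0" using g a1 apos by (simp add: q_def)
        have ca: "c * a = 1 / q" using g a1 apos by (simp add: q_def c_def)
        have "gamma / 2 * (s th - (mu th)\<^sup>2) \<ge> gamma / 2 * ((mu th)\<^sup>2 * (1 - a) / a)"
          using mult_left_mono[OF VL[OF th True], of "gamma / 2"] g by simp
        also have "gamma / 2 * ((mu th)\<^sup>2 * (1 - a) / a) = q / 2 * (mu th)\<^sup>2" by (simp add: q_def field_simps)
        finally have l1: "gamma / 2 * (s th - (mu th)\<^sup>2) \<ge> q / 2 * (mu th)\<^sup>2" .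
        have "0 \<le> (q * mu th - 1)\<^sup>2" by simp
        then have "2 * q * mu th - q\<^sup>2 * (mu th)\<^sup>2 \<le> 1" by (simp add: power2_eq_square algebra_simps)
        then have "mu th - q / 2 * (mu th)\<^sup>2 \<le> 1 / (2 * q)" using q0
          by (simp add: field_simps power2_eq_square)
        then show ?thesis unfolding W2[OF th] unfolding W1[OF th] using l1 ca by simp
      qed
    qed
  next
    assume mx: "m > x"
    define c where "c = (m - x) / a"
    have c0: "c > 0" using mx apos by (simp add: c_def)
    have th'K: "c *\<^sub>R phi \<in> K" using cK[OF phiK] c0 by simp
    have m': "mu (c *\<^sub>R phi) = m - x" and s': "s (c *\<^sub>R phi) = c\<^sup>2 * a"
      using scale[OF phiK, of c] c0 ab apos unfolding a_def b_def c_def by auto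
    have V': "P.variance (wealth x G (c *\<^sub>R phi)) = (m - x)\<^sup>2 * (1 - a) / a"
    proof -
      have "P.variance (wealth x G (c *\<^sub>R phi)) = c\<^sup>2 * a - (m - x)\<^sup>2" unfolding W2[OF th'K] unfolding W1[OF th'K] using m' s' by simp
      also have "c\<^sup>2 * a = (m - x)\<^sup>2 / a" using apos by (simp add: c_def power2_eq_square)
      finally show ?thesis using apos by (simp add: field_simps)
    qed
    show "let th' = ((m - x) / P.expectation (G phi)) *\<^sub>R phi
            in th' \<in> K \<and> P.expectation (wealth x G th') = m \<and>
               (\<forall>th\<in>K. P.expectation (wealth x G th) = m \<longrightarrow>
                  P.variance (wealth x G th') \<le> P.variance (wealth x G th))"
      unfolding Let_def mu_def[symmetric] a_def[symmetric] c_def[symmetric] V'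
    proof (intro conjI ballI impI th'K)
      show "P.expectation (wealth x G (c *\<^sub>R phi)) = m" unfolding W1[OF th'K] using m' by simp
      fix th assume th: "th \<in> K" and e: "P.expectation (wealth x G th) = m"
      have mth: "mu th = m - x" using W1[OF th] e by simp
      then have "mu th > 0" using mx by simp
      then show "(m - x)\<^sup>2 * (1 - a) / a \<le> P.variance (wealth x G th)"
        unfolding W2[OF th] using VL[OF th] mth by simp
    qed
  qed
qed

end
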